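(* Let $I,S\ge 0$ and $j$ be integers with $L(I,S)\le j\le\lfloor I/2\rfloor$, and consider the pairing process described in the context. Let $N(I,S,j)$ be the number of distinct sets of bb-pairings that arise as the set of bb-pairings of some possible wiring with exactly $j$ bb-pairings. Then: if $(I,S,j)$ is not in the dagger case, $N(I,S,j)=\frac{1}{j!}\prod_{k=1}^{j}\binom{I-2(k-1)}{2}$; in the dagger case with $j=0$, $N(I,S,j)=1$; in the dagger case with $j=1$, $N(I,S,j)=\binom{I}{2}-1$; in the dagger case with $j\ge 2$, $N(I,S,j)=\sum_{h=S+1}^{I}N_\dagger(I,S,h)$, where $N_\dagger$ is as defined in the context.
   Context: Pairing process: there are $I$ infected devices $b_1,\dots,b_I$ and $S$ clean devices $w_1,\dots,w_S$. For $t=1,\dots,I$ in this order: if $b_t$ is not yet paired and at least one device other than $b_t$ is not yet paired, then $b_t$ chooses one of the currently unpaired devices other than itself uniformly at random, independently of previous choices, and becomes paired with it; otherwise $b_t$ does nothing. Each device belongs to at most one pair. The wiring is the final set of pairs; a bb-pairing is a pair consisting of two infected devices; a wiring is possible if it occurs with positive probability. $L(I,S)=0$ if $I\le S$; $L(I,S)=\frac{I-S}{2}$ if $I>S$ and $I-S$ is even; $L(I,S)=\frac{I-S-1}{2}$ if $I>S$ and $I-S$ is odd. $(I,S,j)$ is in the dagger case if $I>S$, $I+S$ is odd and $j=\frac{I-S-1}{2}$. In the dagger case with $j\ge2$ and $S+1\le h\le I$: $N_\dagger(I,S,I)=\frac{1}{j!}\prod_{k=0}^{j-1}\binom{I-1-2k}{2}$,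 $N_\dagger(I,S,I-1)=\frac{1}{(j-1)!}(I-2)\prod_{k=0}^{j-2}\binom{I-3-2k}{2}$, and for $S+1\le h\le I-2$: $N_\dagger(I,S,h)=0$ if $j<I-h$, $=\prod_{t=1}^{I-h}(h-t)$ if $j=I-h$, and $=\frac{1}{(j-I+h)!}\prod_{t=1}^{I-h}(h-t)\prod_{t=1}^{j-I+h}\binom{2h-I-1-2(t-1)}{2}$ if $j>I-h$. *)

theory Defs
  imports Complex_Main
begin

text \<open>Devices: infected devices B 1, ..., B I and clean devices W 1, ..., W S.\<close>
datatype dev = B nat | W nat

definition devices :: "nat \<Rightarrow> nat \<Rightarrow> dev set" where
  "devices I S = B ` {1..I} \<union> W ` {1..S}"

definition unpaired :: "nat \<Rightarrow> nat \<Rightarrow> dev set set \<Rightarrow> dev set" where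
  "unpaired I S M = devices I S - \<Union> M"

text \<open>reach I S t M: the partial wiring M can occur (with positive probability)
  after steps 1..t of the pairing process.\<close>
inductive reach :: "nat \<Rightarrow> nat \<Rightarrow> nat \<Rightarrow> dev set set \<Rightarrow> bool" for I S where
  start: "reach I S 0 {}"
| idle: "\<lbrakk> reach I S t M; t < I;
           B (Suc t) \<notin> unpaired I S M \<or> unpaired I S M - {B (Suc t)} = {} \<rbrakk>
         \<Longrightarrow> reach I S (Suc t) M"
| choose: "\<lbrakk> reach I S t M; t < I; B (Suc t) \<in> unpaired I S M;
             d \<in> unpaired I S M; d \<noteq> B (Suc t) \<rbrakk>
         \<Longrightarrow> reach I S (Suc t) (insert {B (Suc t), d} M)"

definition possible_wiring :: "nat \<Rightarrow> nat \<Rightarrow> dev set set \<Rightarrow> bool" where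
  "possible_wiring I S M \<longleftrightarrow> reach I S I M"

definition is_inf :: "dev \<Rightarrow> bool" where
  "is_inf d \<longleftrightarrow> (\<exists>t. d = B t)"

definition bb_pairings :: "dev set set \<Rightarrow> dev set set" where
  "bb_pairings M = {p \<in> M. \<forall>x\<in>p. is_inf x}"

definition Ncount :: "nat \<Rightarrow> nat \<Rightarrow> nat \<Rightarrow> nat" where
  "Ncount I S j = card {bb_pairings M | M. possible_wiring I S M \<and> card (bb_pairings M) = j}"

definition L :: "nat \<Rightarrow> nat \<Rightarrow> nat" where
  "L I S = (if I \<le> S then 0 else if even (I - S) then (I - S) div 2 else (I - S - 1) div 2)"

definition dagger_case :: "nat \<Rightarrow> nat \<Rightarrow> nat \<Rightarrow> bool" where
  "dagger_case I S j \<longleftrightarrow> I > S \<and> odd (I + S) \<and> 2 * j = I - S - 1"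

text \<open>N_dagger(I,S,h), with j = (I-S-1)/2 (meaningful for j \<ge> 2, S+1 \<le> h \<le> I).
  Binomials (x choose 2) of integer arguments are written as x gchoose 2.\<close>
definition N_dagger :: "nat \<Rightarrow> nat \<Rightarrow> nat \<Rightarrow> real" where
  "N_dagger I S h = (let j = (I - S - 1) div 2 in
     if h = I then
       1 / fact j * (\<Prod>k<j. (real I - 1 - 2 * real k) gchoose 2)
     else if h = I - 1 then
       1 / fact (j - 1) * (real I - 2) * (\<Prod>k<j-1. (real I - 3 - 2 * real k) gchoose 2)
     else if j < I - h then 0
     else if j = I - h then (\<Prod>t=1..I-h. real h - real t)
     else 1 / fact (j - (I - h)) * (\<Prod>t=1..I-h. real h - real t)
            * (\<Prod>t=1..j-(I-h). (2 * real h - real I - 1 - 2 * (real t - 1)) gchoose 2))"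

end

theory Submission
  imports Defs
begin



definition pairs_of :: "'a set \<Rightarrow> 'a set set" where
  "pairs_of A = {p. p \<subseteq> A \<and> card p = 2}"
definition matching :: "'a set \<Rightarrow> 'a set set \<Rightarrow> bool" where
  "matching A P \<longleftrightarrow> P \<subseteq> pairs_of A \<and> (\<forall>p\<in>P. \<forall>q\<in>P. p \<noteq> q \<longrightarrow> p \<inter> q = {})"
definition Mat :: "'a set \<Rightarrow> nat \<Rightarrow> 'a set set set" where
  "Mat A m = {P. matching A P \<and> card P = m}"

fun F :: "nat \<Rightarrow> nat \<Rightarrow> real" where
  "F n 0 = 1"
| "F n (Suc m) = (real n gchoose 2) / real (Suc m) * F (n - 2) m"

lemma finite_Mat: "finite A \<Longrightarrow> finite (Mat A m)"
  by (rule finite_subset[of _ "Pow (Pow A)"]) (auto simp: Mat_def matching_def pairs_of_def)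

lemma matching_finite: "finite A \<Longrightarrow> matching A P \<Longrightarrow> finite P"
  by (rule finite_subset[of _ "Pow A"]) (auto simp: matching_def pairs_of_def)

lemma card_pairs_of: "finite A \<Longrightarrow> card (pairs_of A) = card A choose 2"
  unfolding pairs_of_def by (rule n_subsets)

lemma finite_pairs_of: "finite A \<Longrightarrow> finite (pairs_of A)"
  by (rule finite_subset[of _ "Pow A"]) (auto simp: pairs_of_def)

lemma Mat_0: "finite A \<Longrightarrow> Mat A 0 = {{}}"
proof (intro equalityI subsetI)
  fix P assume "finite A" "P \<in> Mat A 0"
  then have "matching A P" "card P = 0" by (auto simp: Mat_def)
  moreover then have "finite P" using \<open>finite A\<close> matching_finite by blast
  ultimately show "P \<in> {{}}" by simp
qed (auto simp: Mat_def matching_def)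

lemma pair_notin_Mat_minus:
  assumes "p \<in> pairs_of A" "Q \<in> Mat (A - p) m" shows "p \<notin> Q"
proof
  assume "p \<in> Q"
  then have "p \<subseteq> A - p" "card p = 2" using assms
    by (auto simp: Mat_def matching_def pairs_of_def)
  moreover from this(1) have "p = {}" by blast
  ultimately show False by simp
qed

lemma Mat_Suc_bij:
  assumes "finite A"
  shows "bij_betw (\<lambda>(P,p). (p, P - {p})) (SIGMA P:Mat A (Suc m). P) (SIGMA p:pairs_of A. Mat (A - p) m)"
proof (rule bij_betw_byWitness[where f'="\<lambda>(p,Q). (insert p Q, p)"])
  show "\<forall>a\<in>(SIGMA P:Mat A (Suc m). P). (\<lambda>(p,Q). (insert p Q, p)) ((\<lambda>(P,p). (p, P - {p})) a) = a"
    by (clarsimp simp: insert_absorb)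
  show "\<forall>a\<in>(SIGMA p:pairs_of A. Mat (A - p) m). (\<lambda>(P,p). (p, P - {p})) ((\<lambda>(p,Q). (insert p Q, p)) a) = a"
  proof
    fix a assume "a \<in> (SIGMA p:pairs_of A. Mat (A - p) m)"
    then obtain p Q where a: "a = (p,Q)" "p \<in> pairs_of A" "Q \<in> Mat (A - p) m" by blast
    then have "p \<notin> Q" using pair_notin_Mat_minus by blast
    then show "(\<lambda>(P,p). (p, P - {p})) ((\<lambda>(p,Q). (insert p Q, p)) a) = a" using a by simp
  qed
  show "(\<lambda>(P,p). (p, P - {p})) ` (SIGMA P:Mat A (Suc m). P) \<subseteq> (SIGMA p:pairs_of A. Mat (A - p) m)"
  proof
    fix x assume "x \<in> (\<lambda>(P,p). (p, P - {p})) ` (SIGMA P:Mat A (Suc m). P)"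
    then obtain P p where x: "x = (p, P - {p})" and P: "P \<in> Mat A (Suc m)" and p: "p \<in> P" by auto
    have fP: "finite P" using P assms matching_finite by (auto simp: Mat_def)
    have mP: "matching A P" "card P = Suc m" using P by (auto simp: Mat_def)
    have pA: "p \<in> pairs_of A" using mP p by (auto simp: matching_def)
    have "matching (A - p) (P - {p})"
      unfolding matching_def pairs_of_def
    proof (intro conjI ballI impI subsetI)
      fix q assume q: "q \<in> P - {p}"
      then have "q \<inter> p = {}" "q \<in> pairs_of A" using mP p by (auto simp: matching_def)
      then show "q \<in> {pa. pa \<subseteq> A - p \<and> card pa = 2}" by (auto simp: pairs_of_def)
    next
      fix q r assume "q \<in> P - {p}" "r \<in> P - {p}" "q \<noteq> r"
      then show "q \<inter> r = {}" using mP by (auto simp: matching_def)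
    qed
    moreover have "card (P - {p}) = m" using mP p fP by simp
    ultimately show "x \<in> (SIGMA p:pairs_of A. Mat (A - p) m)" using x pA by (simp add: Mat_def)
  qed
  show "(\<lambda>(p,Q). (insert p Q, p)) ` (SIGMA p:pairs_of A. Mat (A - p) m) \<subseteq> (SIGMA P:Mat A (Suc m). P)"
  proof
    fix x assume "x \<in> (\<lambda>(p,Q). (insert p Q, p)) ` (SIGMA p:pairs_of A. Mat (A - p) m)"
    then obtain p Q where x: "x = (insert p Q, p)" and p: "p \<in> pairs_of A" and Q: "Q \<in> Mat (A - p) m" by auto
    have fQ: "finite Q" using Q assms matching_finite by (auto simp: Mat_def)
    have mQ: "matching (A - p) Q" "card Q = m" using Q by (auto simp: Mat_def)
    have nQ: "p \<notin> Q" using pair_notin_Mat_minus p Q by blast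
    have "matching A (insert p Q)"
      unfolding matching_def
    proof (intro conjI ballI impI subsetI)
      fix q assume "q \<in> insert p Q"
      then show "q \<in> pairs_of A" using p mQ by (auto simp: matching_def pairs_of_def)
    next
      fix q r assume "q \<in> insert p Q" "r \<in> insert p Q" "q \<noteq> r"
      then show "q \<inter> r = {}"
      proof (elim insertE)
        assume "q = p" "r \<in> Q" then show ?thesis using mQ by (auto simp: matching_def pairs_of_def)
      next
        assume "q \<in> Q" "r = p" then show ?thesis using mQ by (auto simp: matching_def pairs_of_def)
      next
        assume "q \<in> Q" "r \<in> Q" then show ?thesis using mQ \<open>q \<noteq> r\<close> unfolding matching_def by blast
      qed (use \<open>q \<noteq> r\<close> in simp)
    qed
    moreover have "card (insert p Q) = Suc m" using mQ nQ fQ by simp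
    ultimately show "x \<in> (SIGMA P:Mat A (Suc m). P)" using x by (simp add: Mat_def)
  qed
qed

lemma card_Mat: "finite A \<Longrightarrow> real (card (Mat A m)) = F (card A) m"
proof (induction m arbitrary: A)
  case 0 then show ?case by (simp add: Mat_0)
next
  case (Suc m)
  have fin: "finite (Mat A (Suc m))" using Suc.prems finite_Mat by auto
  have "card (SIGMA P:Mat A (Suc m). P) = (\<Sum>P\<in>Mat A (Suc m). card P)"
    using fin Suc.prems by (intro card_SigmaI) (auto dest: matching_finite simp: Mat_def)
  also have "\<dots> = (\<Sum>P\<in>Mat A (Suc m). Suc m)" by (rule sum.cong) (auto simp: Mat_def)
  also have "\<dots> = Suc m * card (Mat A (Suc m))" by simp
  finally have 1: "card (SIGMA P:Mat A (Suc m). P) = Suc m * card (Mat A (Suc m))" .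
  have "card (SIGMA p:pairs_of A. Mat (A - p) m) = (\<Sum>p\<in>pairs_of A. card (Mat (A - p) m))"
    using Suc.prems by (intro card_SigmaI) (auto simp: finite_pairs_of finite_Mat)
  also have "\<dots> = (\<Sum>p\<in>pairs_of A. F (card A - 2) m)"
    unfolding of_nat_sum
  proof (rule sum.cong)
    fix p assume "p \<in> pairs_of A"
    then have "p \<subseteq> A" "card p = 2" by (auto simp: pairs_of_def)
    then have "card (A - p) = card A - 2" using Suc.prems by (simp add: card_Diff_subset finite_subset)
    then show "real (card (Mat (A - p) m)) = F (card A - 2) m" using Suc.IH Suc.prems by simp
  qed simp
  finally have "real (card (SIGMA p:pairs_of A. Mat (A - p) m)) = (\<Sum>p\<in>pairs_of A. F (card A - 2) m)"
    by simp
  also have "\<dots> = real (card A choose 2) * F (card A - 2) m"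
    using Suc.prems by (simp add: card_pairs_of)
  finally have 2: "real (card (SIGMA p:pairs_of A. Mat (A - p) m)) = real (card A choose 2) * F (card A - 2) m" .
  have "card (SIGMA P:Mat A (Suc m). P) = card (SIGMA p:pairs_of A. Mat (A - p) m)"
    using Mat_Suc_bij[OF Suc.prems] by (rule bij_betw_same_card)
  with 1 2 have "real (Suc m) * real (card (Mat A (Suc m))) = real (card A choose 2) * F (card A - 2) m"
    by (metis of_nat_mult)
  then show ?case by (simp add: binomial_gbinomial field_simps del: of_nat_Suc)
qed




definition D :: "'a set \<Rightarrow> 'a set \<Rightarrow> nat \<Rightarrow> 'a set set set" where
  "D H Lo m = {P \<in> Mat (H \<union> Lo) m. H \<subseteq> \<Union>P \<and> (\<forall>p\<in>P. \<not> p \<subseteq> H)}"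

fun G :: "nat \<Rightarrow> nat \<Rightarrow> nat \<Rightarrow> real" where
  "G 0 l m = F l m"
| "G (Suc k) l 0 = 0"
| "G (Suc k) l (Suc m) = real l * G k (l - 1) m"

lemma D_empty: "D {} Lo m = Mat Lo m"
  by (auto simp: D_def Mat_def matching_def pairs_of_def)

lemma D_0:
  assumes "x \<in> H" "finite H" "finite Lo" shows "D H Lo 0 = {}"
proof -
  { fix P assume "P \<in> D H Lo 0"
    then have m: "matching (H \<union> Lo) P" "card P = 0" "H \<subseteq> \<Union>P" by (auto simp: D_def Mat_def)
    then have "finite P" using assms matching_finite by blast
    with m have "P = {}" by simp
    with m assms have False by auto }
  then show ?thesis by blast
qed

lemma finite_D: "finite H \<Longrightarrow> finite Lo \<Longrightarrow> finite (D H Lo m)"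
  by (rule finite_subset[of _ "Mat (H \<union> Lo) m"]) (auto simp: D_def finite_Mat)

lemma D_cover:
  assumes "P \<in> D H Lo (Suc m)" "x \<in> H" "H \<inter> Lo = {}"
  shows "\<exists>y\<in>Lo. {x, y} \<in> P"
proof -
  have m: "matching (H \<union> Lo) P" "H \<subseteq> \<Union>P" "\<forall>p\<in>P. \<not> p \<subseteq> H" using assms by (auto simp: D_def Mat_def)
  obtain p where p: "p \<in> P" "x \<in> p" using m(2) assms(2) by blast
  then have "p \<subseteq> H \<union> Lo" "card p = 2" using m(1) by (auto simp: matching_def pairs_of_def)
  then obtain a b where ab: "p = {a, b}" "a \<noteq> b" by (meson card_2_iff)
  have "\<not> p \<subseteq> H" using m(3) p by blast
  then obtain y where y: "y \<in> p" "y \<notin> H" by blast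
  then have "y \<in> Lo" using \<open>p \<subseteq> H \<union> Lo\<close> by blast
  have "y \<noteq> x" using y assms(2) by blast
  then have "p = {x, y}" using ab p y by auto
  then show ?thesis using \<open>y \<in> Lo\<close> p by blast
qed

lemma D_part_bij:
  assumes "x \<in> H" "y \<in> Lo" "H \<inter> Lo = {}" "finite H" "finite Lo"
  shows "bij_betw (\<lambda>P. P - {{x,y}}) {P \<in> D H Lo (Suc m). {x, y} \<in> P} (D (H - {x}) (Lo - {y}) m)"
proof (rule bij_betw_byWitness[where f'="\<lambda>Q. insert {x,y} Q"])
  have xy: "x \<noteq> y" "x \<notin> Lo" "y \<notin> H" using assms by auto
  have un: "(H - {x}) \<union> (Lo - {y}) = (H \<union> Lo) - {x, y}" using xy by auto
  have nQ: "{x,y} \<notin> Q" if "Q \<in> D (H - {x}) (Lo - {y}) m" for Q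
  proof
    assume "{x,y} \<in> Q"
    then have "{x,y} \<subseteq> (H-{x}) \<union> (Lo-{y})" using that unfolding D_def Mat_def matching_def pairs_of_def by blast
    then show False using xy by blast
  qed
  show "\<forall>P\<in>{P \<in> D H Lo (Suc m). {x, y} \<in> P}. insert {x, y} (P - {{x, y}}) = P" by (simp add: insert_absorb)
  show "\<forall>Q\<in>D (H - {x}) (Lo - {y}) m. insert {x, y} Q - {{x, y}} = Q" using nQ by simp
  show "(\<lambda>P. P - {{x,y}}) ` {P \<in> D H Lo (Suc m). {x, y} \<in> P} \<subseteq> D (H - {x}) (Lo - {y}) m"
  proof clarify
    fix P assume P: "P \<in> D H Lo (Suc m)" "{x,y} \<in> P"
    have m: "matching (H \<union> Lo) P" "card P = Suc m" "H \<subseteq> \<Union>P" "\<forall>p\<in>P. \<not> p \<subseteq> H"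
      using P by (auto simp: D_def Mat_def)
    have fP: "finite P" using m(1) assms matching_finite by blast
    have disj: "\<forall>p\<in>P. \<forall>q\<in>P. p \<noteq> q \<longrightarrow> p \<inter> q = {}" using m(1) by (simp add: matching_def)
    have dis: "q \<inter> {x,y} = {}" if "q \<in> P - {{x,y}}" for q
    proof -
      have "q \<in> P" "q \<noteq> {x,y}" using that by auto
      then show ?thesis using disj[rule_format, OF \<open>q \<in> P\<close> P(2)] by simp
    qed
    have "matching ((H - {x}) \<union> (Lo - {y})) (P - {{x,y}})"
      unfolding matching_def un
    proof (intro conjI ballI impI subsetI)
      fix q assume q: "q \<in> P - {{x, y}}"
      then have "q \<in> pairs_of (H \<union> Lo)" using m(1) by (auto simp: matching_def)
      then show "q \<in> pairs_of (H \<union> Lo - {x, y})" using dis[OF q] by (auto simp: pairs_of_def)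
    next
      fix q r assume "q \<in> P - {{x, y}}" "r \<in> P - {{x, y}}" "q \<noteq> r"
      then show "q \<inter> r = {}" using m(1) by (auto simp: matching_def)
    qed
    moreover have "card (P - {{x,y}}) = m" using m(2) P(2) fP by simp
    moreover have "H - {x} \<subseteq> \<Union>(P - {{x,y}})"
    proof
      fix h assume h: "h \<in> H - {x}"
      then obtain q where "q \<in> P" "h \<in> q" using m(3) by blast
      moreover have "h \<notin> {x,y}" using h xy by auto
      ultimately have "q \<in> P - {{x,y}}" "h \<in> q" by auto
      then show "h \<in> \<Union>(P - {{x,y}})" by (rule UnionI)
    qed
    moreover have "\<forall>q\<in>P - {{x,y}}. \<not> q \<subseteq> H - {x}" using m(4) by blast
    ultimately show "P - {{x,y}} \<in> D (H - {x}) (Lo - {y}) m" unfolding D_def Mat_def mem_Collect_eq by (intro conjI)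
  qed
  show "(\<lambda>Q. insert {x,y} Q) ` D (H - {x}) (Lo - {y}) m \<subseteq> {P \<in> D H Lo (Suc m). {x, y} \<in> P}"
  proof clarify
    fix Q assume Q: "Q \<in> D (H - {x}) (Lo - {y}) m"
    have m: "matching ((H - {x}) \<union> (Lo - {y})) Q" "card Q = m" "H - {x} \<subseteq> \<Union>Q" "\<forall>p\<in>Q. \<not> p \<subseteq> H - {x}"
      using Q by (auto simp: D_def Mat_def)
    have fQ: "finite Q" using assms by (intro matching_finite[OF _ m(1)]) simp
    have dis: "q \<inter> {x,y} = {}" "q \<subseteq> H \<union> Lo" if "q \<in> Q" for q
    proof -
      have "Q \<subseteq> pairs_of ((H - {x}) \<union> (Lo - {y}))" using m(1) by (simp add: matching_def)
      then have "q \<in> pairs_of ((H - {x}) \<union> (Lo - {y}))" using that by (rule subsetD)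
      then have "q \<subseteq> (H - {x}) \<union> (Lo - {y})" by (simp add: pairs_of_def)
      then show "q \<inter> {x,y} = {}" "q \<subseteq> H \<union> Lo" using xy by auto
    qed
    have xyp: "{x,y} \<in> pairs_of (H \<union> Lo)" using assms xy by (auto simp: pairs_of_def)
    have "matching (H \<union> Lo) (insert {x,y} Q)"
      unfolding matching_def
    proof (intro conjI ballI impI subsetI)
      fix q assume "q \<in> insert {x, y} Q"
      then show "q \<in> pairs_of (H \<union> Lo)" using xyp m(1) un by (auto simp: matching_def pairs_of_def)
    next
      fix q r assume qr: "q \<in> insert {x, y} Q" "r \<in> insert {x, y} Q" "q \<noteq> r"
      show "q \<inter> r = {}"
      proof (cases "q = {x,y}")
        case True then show ?thesis using qr dis by blast
      next
        case False
        show ?thesis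
        proof (cases "r = {x,y}")
          case True then show ?thesis using qr dis False by blast
        next
          case False2: False
          then show ?thesis using qr False m(1) unfolding matching_def by blast
        qed
      qed
    qed
    moreover have "card (insert {x,y} Q) = Suc m" using m(2) nQ[OF Q] fQ by simp
    moreover have "H \<subseteq> \<Union>(insert {x,y} Q)" using m(3) by blast
    moreover have "\<forall>q\<in>insert {x,y} Q. \<not> q \<subseteq> H"
    proof
      fix q assume "q \<in> insert {x,y} Q"
      then show "\<not> q \<subseteq> H"
      proof
        assume "q = {x,y}" then show ?thesis using xy by auto
      next
        assume "q \<in> Q"
        show ?thesis
        proof
          assume "q \<subseteq> H"
          then have "q \<subseteq> H - {x}" using dis(1)[OF \<open>q \<in> Q\<close>] by auto
          then show False using m(4) \<open>q \<in> Q\<close> by auto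
        qed
      qed
    qed
    ultimately show "insert {x,y} Q \<in> D H Lo (Suc m) \<and> {x, y} \<in> insert {x,y} Q" by (simp add: D_def Mat_def)
  qed
qed

lemma card_D:
  "finite H \<Longrightarrow> finite Lo \<Longrightarrow> H \<inter> Lo = {} \<Longrightarrow> real (card (D H Lo m)) = G (card H) (card Lo) m"
proof (induction "card H" arbitrary: H Lo m)
  case 0
  then have "H = {}" by simp
  then show ?case using 0 by (simp add: D_empty card_Mat)
next
  case (Suc k)
  then obtain x where x: "x \<in> H" by (metis card.empty ex_in_conv nat.simps(3))
  show ?case
  proof (cases m)
    case 0 then show ?thesis using D_0[OF x Suc.prems(1,2)] Suc.hyps(2)[symmetric] by simp
  next
    case Sm: (Suc m')
    let ?E = "\<lambda>y. {P \<in> D H Lo (Suc m'). {x, y} \<in> P}"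
    have eq: "D H Lo (Suc m') = (\<Union>y\<in>Lo. ?E y)"
    proof (intro equalityI subsetI)
      fix P
      assume P: "P \<in> D H Lo (Suc m')"
      then obtain y where "y \<in> Lo" "{x,y} \<in> P" using D_cover[OF _ x Suc.prems(3)] by blast
      then show "P \<in> (\<Union>y\<in>Lo. ?E y)" using P by (intro UN_I[of y]) auto
    next
      fix P assume "P \<in> (\<Union>y\<in>Lo. ?E y)"
      then show "P \<in> D H Lo (Suc m')" by (simp only: UN_iff mem_Collect_eq) (elim bexE conjE)
    qed
    have "card (\<Union>y\<in>Lo. ?E y) = (\<Sum>y\<in>Lo. card (?E y))"
    proof (rule card_UN_disjoint[of Lo ?E])
      show "finite Lo" by fact
      show "\<forall>y\<in>Lo. finite (?E y)" using finite_D[OF Suc.prems(1,2)] by auto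
      show "\<forall>y\<in>Lo. \<forall>y'\<in>Lo. y \<noteq> y' \<longrightarrow> ?E y \<inter> ?E y' = {}"
      proof (intro ballI impI)
        fix y y' assume "y \<in> Lo" "y' \<in> Lo" "y \<noteq> y'"
        show "?E y \<inter> ?E y' = {}"
        proof (rule ccontr)
          assume "?E y \<inter> ?E y' \<noteq> {}"
          then obtain P where P: "P \<in> D H Lo (Suc m')" "{x,y} \<in> P" "{x,y'} \<in> P" by blast
          then have "matching (H \<union> Lo) P" by (simp add: D_def Mat_def)
          then have disj: "\<forall>p\<in>P. \<forall>q\<in>P. p \<noteq> q \<longrightarrow> p \<inter> q = {}" by (simp add: matching_def)
          have neq: "{x,y} \<noteq> {x,y'}" using \<open>y \<noteq> y'\<close> by (auto simp: doubleton_eq_iff)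
          have "{x,y} \<inter> {x,y'} = {}" using disj[rule_format, OF P(2) P(3) neq] .
          then show False by simp
        qed
      qed
    qed
    also have "\<dots> = (\<Sum>y\<in>Lo. card (D (H - {x}) (Lo - {y}) m'))"
    proof (rule sum.cong)
      fix y assume "y \<in> Lo"
      show "card (?E y) = card (D (H - {x}) (Lo - {y}) m')"
        by (rule bij_betw_same_card[OF D_part_bij[OF x \<open>y \<in> Lo\<close> Suc.prems(3,1,2)]])
    qed simp
    finally have "real (card (D H Lo (Suc m'))) = (\<Sum>y\<in>Lo. real (card (D (H - {x}) (Lo - {y}) m')))"
      using eq by simp
    also have "\<dots> = (\<Sum>y\<in>Lo. G k (card Lo - 1) m')"
    proof (rule sum.cong)
      fix y assume "y \<in> Lo"
      have "k = card (H - {x})" using Suc.hyps(2) x Suc.prems by simp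
      then show "real (card (D (H - {x}) (Lo - {y}) m')) = G k (card Lo - 1) m'"
        using Suc.hyps(1)[of "H - {x}" "Lo - {y}" m'] Suc.prems \<open>y \<in> Lo\<close> by auto
    qed simp
    also have "\<dots> = G (card H) (card Lo) m"
      using Suc.hyps(2)[symmetric] Sm by simp
    finally show ?thesis using Sm by simp
  qed
qed




lemma alg1:
  fixes P1 P2 c F' :: real
  assumes "P1 = c * P2" "F' = 1 / fact m * P2"
  shows "c / real (Suc m) * F' = 1 / fact (Suc m) * P1"
proof -
  have f: "(fact (Suc m)::real) = real (Suc m) * fact m" by (simp del: of_nat_Suc)
  have "1 / fact (Suc m) * P1 = c * (1/fact m * P2) / real (Suc m)"
    unfolding assms(1) f by (simp del: of_nat_Suc)
  then show ?thesis using assms(2) by simp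
qed

lemma F_closed: "F n m = 1 / fact m * (\<Prod>k=1..m. real (n - 2 * (k - 1)) gchoose 2)"
proof (induction m arbitrary: n)
  case 0 then show ?case by simp
next
  case (Suc m)
  have "(\<Prod>k=1..Suc m. real (n - 2 * (k - 1)) gchoose 2)
      = (real n gchoose 2) * (\<Prod>k=Suc 1..Suc m. real (n - 2 * (k - 1)) gchoose 2)"
    by (subst prod.atLeast_Suc_atMost) simp_all
  also have "(\<Prod>k=Suc 1..Suc m. real (n - 2 * (k - 1)) gchoose 2)
      = (\<Prod>k=1..m. real (n - 2 * (Suc k - 1)) gchoose 2)"
    by (rule prod.shift_bounds_cl_Suc_ivl)
  also have "\<dots> = (\<Prod>k=1..m. real (n - 2 - 2 * (k - 1)) gchoose 2)"
  proof (rule prod.cong)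
    fix k assume "k \<in> {1..m}"
    then have "n - 2 * (Suc k - 1) = n - 2 - 2 * (k - 1)" by auto
    then show "real (n - 2 * (Suc k - 1)) gchoose 2 = real (n - 2 - 2 * (k - 1)) gchoose 2" by simp
  qed simp
  finally have "(\<Prod>k=1..Suc m. real (n - 2 * (k - 1)) gchoose 2)
      = (real n gchoose 2) * (\<Prod>k=1..m. real (n - 2 - 2 * (k - 1)) gchoose 2)" .
  then show ?case unfolding F.simps by (rule alg1) (rule Suc.IH)
qed

lemma G_closed:
  "G k l m = (if k \<le> m then (\<Prod>t=1..k. real l + 1 - real t) * F (l - k) (m - k) else 0)"
proof (induction k arbitrary: l m)
  case 0 then show ?case by simp
next
  case (Suc k)
  show ?case
  proof (cases m)
    case 0 then show ?thesis by simp
  next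
    case (Suc m')
    have p: "(\<Prod>t=1..Suc k. real l + 1 - real t) = real l * (\<Prod>t=Suc 1..Suc k. real l + 1 - real t)"
      by (subst prod.atLeast_Suc_atMost) simp_all
    have p2: "(\<Prod>t=Suc 1..Suc k. real l + 1 - real t) = (\<Prod>t=1..k. real l - real t)"
      by (subst prod.shift_bounds_cl_Suc_ivl) simp
    show ?thesis
    proof (cases "l = 0")
      case True
      have "(\<Prod>t=1..Suc k. real l + 1 - real t) = 0" using p True by simp
      then show ?thesis using Suc True by simp
    next
      case False
      then have "real (l - 1) = real l - 1" by simp
      then have "(\<Prod>t=1..k. real (l - 1) + 1 - real t) = (\<Prod>t=1..k. real l - real t)" by simp
      have e1: "l - 1 - k = l - Suc k" by simp
      have e2: "Suc m' - Suc k = m' - k" by simp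
      show ?thesis
        using Suc.IH[of "l - 1" m'] Suc p p2 e1 e2 \<open>(\<Prod>t=1..k. real (l - 1) + 1 - real t) = (\<Prod>t=1..k. real l - real t)\<close>
        by (simp del: prod.cl_ivl_Suc)
    qed
  qed
qed




definition Inv :: "nat \<Rightarrow> nat \<Rightarrow> nat \<Rightarrow> dev set set \<Rightarrow> bool" where
  "Inv I S t M \<longleftrightarrow>
     (\<forall>p\<in>M. \<exists>a d. p = {B a, d} \<and> 1 \<le> a \<and> a \<le> t \<and> d \<in> devices I S \<and> d \<noteq> B a \<and> (\<forall>c. d = B c \<longrightarrow> a < c))
   \<and> (\<forall>p\<in>M. \<forall>q\<in>M. p \<noteq> q \<longrightarrow> p \<inter> q = {})
   \<and> (\<forall>a. 1 \<le> a \<and> a \<le> t \<longrightarrow> B a \<in> \<Union>M \<or> (devices I S - {B a} \<subseteq> \<Union>M \<and> (\<forall>p\<in>M. \<exists>c<a. B c \<in> p)))"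

lemma B_in_devices: "B a \<in> devices I S \<longleftrightarrow> 1 \<le> a \<and> a \<le> I"
  by (auto simp: devices_def)

lemma W_in_devices: "W a \<in> devices I S \<longleftrightarrow> 1 \<le> a \<and> a \<le> S"
  by (auto simp: devices_def)

lemma c1E:
  assumes "\<forall>p\<in>M. \<exists>a d. p = {B a, d} \<and> 1 \<le> a \<and> a \<le> t \<and> d \<in> devices I S \<and> d \<noteq> B a \<and> (\<forall>c. d = B c \<longrightarrow> a < c)" "p \<in> M"
  obtains a d where "p = {B a, d}" "1 \<le> a" "a \<le> t" "d \<in> devices I S" "d \<noteq> B a" "\<forall>c. d = B c \<longrightarrow> a < c"
  using assms by meson

lemma reach_Inv: "reach I S t M \<Longrightarrow> t \<le> I \<and> Inv I S t M"
proof (induction rule: reach.induct)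
  case start
  then show ?case by (simp add: Inv_def)
next
  case (idle t M)
  then have inv: "Inv I S t M" by simp
  note cc = inv[unfolded Inv_def]
  have c1: "\<forall>p\<in>M. \<exists>a d. p = {B a, d} \<and> 1 \<le> a \<and> a \<le> t \<and> d \<in> devices I S \<and> d \<noteq> B a \<and> (\<forall>c. d = B c \<longrightarrow> a < c)" using cc by (rule conjunct1)
  have c2: "\<forall>p\<in>M. \<forall>q\<in>M. p \<noteq> q \<longrightarrow> p \<inter> q = {}" using cc[THEN conjunct2] by (rule conjunct1)
  have c3: "\<forall>a. 1 \<le> a \<and> a \<le> t \<longrightarrow> B a \<in> \<Union>M \<or> (devices I S - {B a} \<subseteq> \<Union>M \<and> (\<forall>p\<in>M. \<exists>c<a. B c \<in> p))" using cc[THEN conjunct2] by (rule conjunct2)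
  have new: "B (Suc t) \<in> \<Union>M \<or> (devices I S - {B (Suc t)} \<subseteq> \<Union>M \<and> (\<forall>p\<in>M. \<exists>c<Suc t. B c \<in> p))"
  proof (cases "B (Suc t) \<in> unpaired I S M")
    case False
    moreover have "B (Suc t) \<in> devices I S" using idle.hyps(2) by (simp add: B_in_devices)
    ultimately show ?thesis by (simp add: unpaired_def)
  next
    case True
    then have "unpaired I S M - {B (Suc t)} = {}" using idle.hyps(3) by blast
    then have "devices I S - {B (Suc t)} \<subseteq> \<Union>M" by (auto simp: unpaired_def)
    moreover have "\<forall>p\<in>M. \<exists>c<Suc t. B c \<in> p"
    proof
      fix p assume "p \<in> M"
      obtain a d where ad_6: "p = {B a, d}" "1 \<le> a" "a \<le> t" "d \<in> devices I S" "d \<noteq> B a" "\<forall>c. d = B c \<longrightarrow> a < c" by (rule c1E[OF c1 \<open>p \<in> M\<close>])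
        note ad_sub = ad_6(1,3)
        note ad_sub
      then have "a < Suc t" "B a \<in> p" by auto
      then show "\<exists>c<Suc t. B c \<in> p" by blast
    qed
    ultimately have "devices I S - {B (Suc t)} \<subseteq> \<Union>M \<and> (\<forall>p\<in>M. \<exists>c<Suc t. B c \<in> p)" by (rule conjI)
    then show ?thesis by (rule disjI2)
  qed
  have "Inv I S (Suc t) M"
    unfolding Inv_def
  proof (intro conjI)
    show "\<forall>p\<in>M. \<exists>a d. p = {B a, d} \<and> 1 \<le> a \<and> a \<le> Suc t \<and> d \<in> devices I S \<and> d \<noteq> B a \<and> (\<forall>c. d = B c \<longrightarrow> a < c)"
    proof
      fix p assume "p \<in> M"
      obtain a e where ae_6: "p = {B a, e}" "1 \<le> a" "a \<le> t" "e \<in> devices I S" "e \<noteq> B a" "\<forall>c. e = B c \<longrightarrow> a < c" by (rule c1E[OF c1 \<open>p \<in> M\<close>])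
        then have "p = {B a, e} \<and> 1 \<le> a \<and> a \<le> t \<and> e \<in> devices I S \<and> e \<noteq> B a \<and> (\<forall>c. e = B c \<longrightarrow> a < c)" by (intro conjI) assumption+
      then show "\<exists>a d. p = {B a, d} \<and> 1 \<le> a \<and> a \<le> Suc t \<and> d \<in> devices I S \<and> d \<noteq> B a \<and> (\<forall>c. d = B c \<longrightarrow> a < c)"
        by (intro exI[of _ a] exI[of _ e]) simp
    qed
    show "\<forall>p\<in>M. \<forall>q\<in>M. p \<noteq> q \<longrightarrow> p \<inter> q = {}" by fact
    show "\<forall>a. 1 \<le> a \<and> a \<le> Suc t \<longrightarrow> B a \<in> \<Union>M \<or> (devices I S - {B a} \<subseteq> \<Union>M \<and> (\<forall>p\<in>M. \<exists>c<a. B c \<in> p))"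
    proof (intro allI impI)
      fix a assume a: "1 \<le> a \<and> a \<le> Suc t"
      show "B a \<in> \<Union>M \<or> (devices I S - {B a} \<subseteq> \<Union>M \<and> (\<forall>p\<in>M. \<exists>c<a. B c \<in> p))"
      proof (cases "a = Suc t")
        case True then show ?thesis using new by simp
      next
        case False then show ?thesis using c3 a by simp
      qed
    qed
  qed
  then show ?case using idle.hyps(2) by simp
next
  case (choose t M d)
  then have inv: "Inv I S t M" by simp
  note cc = inv[unfolded Inv_def]
  have c1: "\<forall>p\<in>M. \<exists>a d. p = {B a, d} \<and> 1 \<le> a \<and> a \<le> t \<and> d \<in> devices I S \<and> d \<noteq> B a \<and> (\<forall>c. d = B c \<longrightarrow> a < c)" using cc by (rule conjunct1)
  have c2: "\<forall>p\<in>M. \<forall>q\<in>M. p \<noteq> q \<longrightarrow> p \<inter> q = {}" using cc[THEN conjunct2] by (rule conjunct1)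
  have c3: "\<forall>a. 1 \<le> a \<and> a \<le> t \<longrightarrow> B a \<in> \<Union>M \<or> (devices I S - {B a} \<subseteq> \<Union>M \<and> (\<forall>p\<in>M. \<exists>c<a. B c \<in> p))" using cc[THEN conjunct2] by (rule conjunct2)
  have bu: "B (Suc t) \<notin> \<Union>M" "B (Suc t) \<in> devices I S" using choose.hyps(3) by (auto simp: unpaired_def)
  have du: "d \<notin> \<Union>M" "d \<in> devices I S" using choose.hyps(4) by (auto simp: unpaired_def)
  have noold: "B a \<in> \<Union>M" if "1 \<le> a" "a \<le> t" for a
  proof -
    have "B (Suc t) \<in> devices I S - {B a}" using bu that by auto
    moreover have "B a \<in> \<Union>M \<or> (devices I S - {B a} \<subseteq> \<Union>M \<and> (\<forall>p\<in>M. \<exists>c<a. B c \<in> p))"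
      using c3 that by blast
    ultimately show ?thesis using bu(1) by blast
  qed
  have dc: "Suc t < c" if "d = B c" for c
  proof (rule ccontr)
    assume "\<not> Suc t < c"
    moreover have "c \<noteq> Suc t" using choose.hyps(5) that by auto
    moreover have "1 \<le> c" using du(2) that by (simp add: B_in_devices)
    ultimately have "B c \<in> \<Union>M" using noold[of c] by simp
    then show False using du that by simp
  qed
  let ?M = "insert {B (Suc t), d} M"
  have "Inv I S (Suc t) ?M"
    unfolding Inv_def
  proof (intro conjI)
    show "\<forall>p\<in>?M. \<exists>a d. p = {B a, d} \<and> 1 \<le> a \<and> a \<le> Suc t \<and> d \<in> devices I S \<and> d \<noteq> B a \<and> (\<forall>c. d = B c \<longrightarrow> a < c)"
    proof
      fix p assume "p \<in> ?M"
      then show "\<exists>a d. p = {B a, d} \<and> 1 \<le> a \<and> a \<le> Suc t \<and> d \<in> devices I S \<and> d \<noteq> B a \<and> (\<forall>c. d = B c \<longrightarrow> a < c)"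
      proof
        assume "p = {B (Suc t), d}"
        then show ?thesis using du(2) choose.hyps(5) dc
          by (intro exI[of _ "Suc t"] exI[of _ d]) simp
      next
        assume "p \<in> M"
        obtain a e where ae_6: "p = {B a, e}" "1 \<le> a" "a \<le> t" "e \<in> devices I S" "e \<noteq> B a" "\<forall>c. e = B c \<longrightarrow> a < c" by (rule c1E[OF c1 \<open>p \<in> M\<close>])
        then have "p = {B a, e} \<and> 1 \<le> a \<and> a \<le> t \<and> e \<in> devices I S \<and> e \<noteq> B a \<and> (\<forall>c. e = B c \<longrightarrow> a < c)" by (intro conjI) assumption+
        then show ?thesis by (intro exI[of _ a] exI[of _ e]) simp
      qed
    qed
    show "\<forall>p\<in>?M. \<forall>q\<in>?M. p \<noteq> q \<longrightarrow> p \<inter> q = {}"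
    proof (intro ballI impI)
      fix p q assume "p \<in> ?M" "q \<in> ?M" "p \<noteq> q"
      then consider "p = {B (Suc t), d}" "q \<in> M" | "q = {B (Suc t), d}" "p \<in> M" | "p \<in> M" "q \<in> M" by blast
      then show "p \<inter> q = {}"
      proof cases
        case 1
        have "q \<subseteq> \<Union>M" using 1(2) by blast
        then show ?thesis using 1(1) bu(1) du(1) by auto
      next
        case 2
        have "p \<subseteq> \<Union>M" using 2(2) by blast
        then show ?thesis using 2(1) bu(1) du(1) by auto
      next
        case 3 then show ?thesis using c2[rule_format, of p q] \<open>p \<noteq> q\<close> by simp
      qed
    qed
    show "\<forall>a. 1 \<le> a \<and> a \<le> Suc t \<longrightarrow> B a \<in> \<Union>?M \<or> (devices I S - {B a} \<subseteq> \<Union>?M \<and> (\<forall>p\<in>?M. \<exists>c<a. B c \<in> p))"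
    proof (intro allI impI)
      fix a assume a: "1 \<le> a \<and> a \<le> Suc t"
      show "B a \<in> \<Union>?M \<or> (devices I S - {B a} \<subseteq> \<Union>?M \<and> (\<forall>p\<in>?M. \<exists>c<a. B c \<in> p))"
      proof (cases "a = Suc t")
        case True then show ?thesis by simp
      next
        case False then have "B a \<in> \<Union>M" using noold a by simp
        then show ?thesis by blast
      qed
    qed
  qed
  then show ?case using choose.hyps(2) by simp
qed

definition Mt :: "dev set set \<Rightarrow> nat \<Rightarrow> dev set set" where
  "Mt M t = {p \<in> M. \<exists>a. a \<le> t \<and> B a \<in> p \<and> (\<forall>c. B c \<in> p \<longrightarrow> a \<le> c)}"

lemma chooser_unique:
  assumes "p = {B a, d}" "\<forall>c. d = B c \<longrightarrow> a < c"
  shows "(B a' \<in> p \<and> (\<forall>c. B c \<in> p \<longrightarrow> a' \<le> c)) \<longleftrightarrow> a' = a"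
proof
  assume h: "B a' \<in> p \<and> (\<forall>c. B c \<in> p \<longrightarrow> a' \<le> c)"
  then have "a' \<le> a" using assms by auto
  moreover have "a \<le> a'"
  proof -
    have "B a' = B a \<or> B a' = d" using h assms(1) by simp
    then show ?thesis using assms(2) by auto
  qed
  ultimately show "a' = a" by simp
next
  assume "a' = a"
  then show "B a' \<in> p \<and> (\<forall>c. B c \<in> p \<longrightarrow> a' \<le> c)" using assms by auto
qed

lemma Inv_reach:
  assumes inv: "Inv I S I M"
  shows "reach I S I M"
proof -
  note cc = inv[unfolded Inv_def]
  have c1: "\<forall>p\<in>M. \<exists>a d. p = {B a, d} \<and> 1 \<le> a \<and> a \<le> I \<and> d \<in> devices I S \<and> d \<noteq> B a \<and> (\<forall>c. d = B c \<longrightarrow> a < c)" using cc by (rule conjunct1)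
  have c2: "\<forall>p\<in>M. \<forall>q\<in>M. p \<noteq> q \<longrightarrow> p \<inter> q = {}" using cc[THEN conjunct2] by (rule conjunct1)
  have c3: "\<forall>a. 1 \<le> a \<and> a \<le> I \<longrightarrow> B a \<in> \<Union>M \<or> (devices I S - {B a} \<subseteq> \<Union>M \<and> (\<forall>p\<in>M. \<exists>c<a. B c \<in> p))" using cc[THEN conjunct2] by (rule conjunct2)
  have ch: "p \<in> Mt M t \<longleftrightarrow> p \<in> M \<and> a \<le> t" if "p \<in> M" "p = {B a, d}" "\<forall>c. d = B c \<longrightarrow> a < c" for p a d t
  proof -
    have "(\<exists>a'. a' \<le> t \<and> B a' \<in> p \<and> (\<forall>c. B c \<in> p \<longrightarrow> a' \<le> c)) \<longleftrightarrow> a \<le> t"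
      using chooser_unique[OF that(2,3)] by auto
    then show ?thesis unfolding Mt_def using that(1) by auto
  qed
  have step: "t \<le> I \<Longrightarrow> reach I S t (Mt M t)" for t
  proof (induction t)
    case 0
    have "Mt M 0 = {}"
    proof -
      { fix p assume "p \<in> Mt M 0"
        then have "p \<in> M" by (simp add: Mt_def)
        obtain a d where ad_6: "p = {B a, d}" "1 \<le> a" "a \<le> I" "d \<in> devices I S" "d \<noteq> B a" "\<forall>c. d = B c \<longrightarrow> a < c" by (rule c1E[OF c1 \<open>p \<in> M\<close>])
        note ad = ad_6(1,2,6)
        then have False using ch[OF \<open>p \<in> M\<close> ad(1) ad(3), of 0] \<open>p \<in> Mt M 0\<close> by simp }
      then show ?thesis by blast
    qed
    then show ?case by (simp add: reach.start)
  next
    case (Suc t)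
    then have IH: "reach I S t (Mt M t)" and tI: "t < I" by simp_all
    show ?case
    proof (cases "\<exists>p\<in>M. \<exists>d. p = {B (Suc t), d} \<and> d \<in> devices I S \<and> d \<noteq> B (Suc t) \<and> (\<forall>c. d = B c \<longrightarrow> Suc t < c)")
      case True
      then obtain p d where p: "p \<in> M" "p = {B (Suc t), d}" "d \<in> devices I S" "d \<noteq> B (Suc t)"
        "\<forall>c. d = B c \<longrightarrow> Suc t < c" by blast
      have pnot: "p \<notin> Mt M t" using ch[OF p(1,2,5)] by simp
      have dis: "p \<inter> q = {}" if "q \<in> Mt M t" for q
      proof -
        have "q \<in> M" "q \<noteq> p" using that pnot by (auto simp: Mt_def)
        then show ?thesis using c2 p(1) by blast
      qed
      have bu: "B (Suc t) \<in> unpaired I S (Mt M t)"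
        using dis p(2) tI by (auto simp: unpaired_def B_in_devices)
      have du: "d \<in> unpaired I S (Mt M t)"
        using dis p(2,3) by (auto simp: unpaired_def)
      have eq: "Mt M (Suc t) = insert p (Mt M t)"
      proof (intro equalityI subsetI)
        fix q assume q: "q \<in> Mt M (Suc t)"
        then have "q \<in> M" by (simp add: Mt_def)
        obtain a e where ae_6: "q = {B a, e}" "1 \<le> a" "a \<le> I" "e \<in> devices I S" "e \<noteq> B a" "\<forall>c. e = B c \<longrightarrow> a < c" by (rule c1E[OF c1 \<open>q \<in> M\<close>])
        note ae = ae_6(1,6)
        have "a \<le> Suc t" using ch[OF \<open>q \<in> M\<close> ae, of "Suc t"] q by simp
        show "q \<in> insert p (Mt M t)"
        proof (cases "a = Suc t")
          case True
          then have "q \<inter> p \<noteq> {}" using ae p(2) by auto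
          then have "q = p" using c2 \<open>q \<in> M\<close> p(1) by blast
          then show ?thesis by simp
        next
          case False
          then have "a \<le> t" using \<open>a \<le> Suc t\<close> by simp
          then show ?thesis using ch[OF \<open>q \<in> M\<close> ae, of t] \<open>q \<in> M\<close> by simp
        qed
      next
        fix q assume "q \<in> insert p (Mt M t)"
        then show "q \<in> Mt M (Suc t)"
        proof
          assume "q = p" then show ?thesis using ch[OF p(1,2,5), of "Suc t"] p(1) by simp
        next
          assume "q \<in> Mt M t" then show ?thesis unfolding Mt_def using le_SucI by blast
        qed
      qed
      show ?thesis unfolding eq p(2)
        by (rule reach.choose[OF IH tI bu du p(4)[symmetric, THEN not_sym]])
    next
      case False
      have eq: "Mt M (Suc t) = Mt M t"
      proof (intro equalityI subsetI)
        fix q assume q: "q \<in> Mt M (Suc t)"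
        then have "q \<in> M" by (simp add: Mt_def)
        obtain a e where ae_6: "q = {B a, e}" "1 \<le> a" "a \<le> I" "e \<in> devices I S" "e \<noteq> B a" "\<forall>c. e = B c \<longrightarrow> a < c" by (rule c1E[OF c1 \<open>q \<in> M\<close>])
        note ae = ae_6(1,4,5,6)
        have "a \<le> Suc t" using ch[OF \<open>q \<in> M\<close> ae(1,4), of "Suc t"] q by simp
        moreover have "a \<noteq> Suc t" using False \<open>q \<in> M\<close> ae by blast
        ultimately show "q \<in> Mt M t" using ch[OF \<open>q \<in> M\<close> ae(1,4), of t] \<open>q \<in> M\<close> by simp
      qed (auto simp: Mt_def intro: le_SucI)
      have idl: "B (Suc t) \<notin> unpaired I S (Mt M t) \<or> unpaired I S (Mt M t) - {B (Suc t)} = {}"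
      proof (cases "B (Suc t) \<in> \<Union>M")
        case True
        then obtain q where q: "q \<in> M" "B (Suc t) \<in> q" by blast
        obtain a e where ae_6: "q = {B a, e}" "1 \<le> a" "a \<le> I" "e \<in> devices I S" "e \<noteq> B a" "\<forall>c. e = B c \<longrightarrow> a < c" by (rule c1E[OF c1 \<open>q \<in> M\<close>])
        note ae = ae_6(1,4,5,6)
        have "a \<noteq> Suc t" using False q(1) ae by blast
        then have "e = B (Suc t)" using q(2) ae(1) by auto
        then have "a \<le> t" using ae(4) by simp
        then have "q \<in> Mt M t" using ch[OF q(1) ae(1,4), of t] q(1) by simp
        then show ?thesis using q(2) by (auto simp: unpaired_def)
      next
        case False2: False
        have "1 \<le> Suc t \<and> Suc t \<le> I" using tI by simp
        then have h: "devices I S - {B (Suc t)} \<subseteq> \<Union>M" "\<forall>p\<in>M. \<exists>c<Suc t. B c \<in> p"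
          using c3 False2 by blast+
        have "Mt M t = M"
        proof (intro equalityI subsetI)
          fix q assume "q \<in> M"
          obtain a e where ae_6: "q = {B a, e}" "1 \<le> a" "a \<le> I" "e \<in> devices I S" "e \<noteq> B a" "\<forall>c. e = B c \<longrightarrow> a < c" by (rule c1E[OF c1 \<open>q \<in> M\<close>])
        note ae = ae_6(1,6)
          obtain c where "c < Suc t" "B c \<in> q" using h(2) \<open>q \<in> M\<close> by blast
          then have "a \<le> c" using ae by auto
          then show "q \<in> Mt M t" using ch[OF \<open>q \<in> M\<close> ae, of t] \<open>q \<in> M\<close> \<open>c < Suc t\<close> by simp
        qed (simp add: Mt_def)
        then show ?thesis using h(1) by (auto simp: unpaired_def)
      qed
      show ?thesis unfolding eq by (rule reach.idle[OF IH tI idl])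
    qed
  qed
  have "Mt M I = M"
  proof (intro equalityI subsetI)
    fix q assume "q \<in> M"
    obtain a e where ae_6: "q = {B a, e}" "1 \<le> a" "a \<le> I" "e \<in> devices I S" "e \<noteq> B a" "\<forall>c. e = B c \<longrightarrow> a < c" by (rule c1E[OF c1 \<open>q \<in> M\<close>])
        note ae = ae_6(1,3,6)
    then show "q \<in> Mt M I" using ch[OF \<open>q \<in> M\<close> ae(1,3), of I] \<open>q \<in> M\<close> by simp
  qed (simp add: Mt_def)
  then show ?thesis using step[of I] by simp
qed

lemma possible_wiring_iff: "possible_wiring I S M \<longleftrightarrow> Inv I S I M"
  unfolding possible_wiring_def using reach_Inv Inv_reach by blast




lemma is_inf_B[simp]: "is_inf (B a)" and is_inf_W[simp]: "\<not> is_inf (W y)"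
  by (auto simp: is_inf_def)

lemma Inv_parts:
  assumes "Inv I S I M"
  shows "\<forall>p\<in>M. \<exists>a d. p = {B a, d} \<and> 1 \<le> a \<and> a \<le> I \<and> d \<in> devices I S \<and> d \<noteq> B a \<and> (\<forall>c. d = B c \<longrightarrow> a < c)"
    and "\<forall>p\<in>M. \<forall>q\<in>M. p \<noteq> q \<longrightarrow> p \<inter> q = {}"
    and "\<forall>a. 1 \<le> a \<and> a \<le> I \<longrightarrow> B a \<in> \<Union>M \<or> (devices I S - {B a} \<subseteq> \<Union>M \<and> (\<forall>p\<in>M. \<exists>c<a. B c \<in> p))"
  using assms[unfolded Inv_def] by (rule conjunct1, rule conjunct1[OF conjunct2], rule conjunct2[OF conjunct2])

lemma bb_sub: "bb_pairings M \<subseteq> M"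
  by (auto simp: bb_pairings_def)

lemma bb_sound:
  assumes "Inv I S I M"
  shows "matching (B ` {1..I}) (bb_pairings M)"
proof -
  note c1 = Inv_parts(1)[OF assms] and c2 = Inv_parts(2)[OF assms]
  have "p \<in> pairs_of (B ` {1..I})" if p: "p \<in> bb_pairings M" for p
  proof -
    have pM: "p \<in> M" and inf: "\<forall>x\<in>p. is_inf x" using p by (auto simp: bb_pairings_def)
    obtain a d where ad: "p = {B a, d}" "1 \<le> a" "a \<le> I" "d \<in> devices I S" "d \<noteq> B a" "\<forall>c. d = B c \<longrightarrow> a < c"
      by (rule c1E[OF c1 pM])
    have "is_inf d" using inf ad(1) by simp
    then obtain c where dc: "d = B c" by (auto simp: is_inf_def)
    then have "c \<le> I" "1 \<le> c" using ad(4) by (auto simp: B_in_devices)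
    moreover have "a \<noteq> c" using ad(5) dc by simp
    ultimately show ?thesis using ad dc by (auto simp: pairs_of_def)
  qed
  then show ?thesis unfolding matching_def using c2 bb_sub by blast
qed

lemma card_Union_matching:
  assumes "finite A" "matching A P" shows "card (\<Union>P) = 2 * card P"
proof -
  have fP: "finite P" using assms matching_finite by blast
  have "card (\<Union>P) = sum card P"
    using assms fP by (intro card_Union_disjoint) (auto simp: matching_def pairs_of_def pairwise_def disjnt_def intro: finite_subset)
  also have "\<dots> = sum (\<lambda>_. 2) P" using assms(2) by (intro sum.cong) (auto simp: matching_def pairs_of_def)
  finally show ?thesis by simp
qed

lemma Union_matching_sub: "matching A P \<Longrightarrow> \<Union>P \<subseteq> A"
  by (auto simp: matching_def pairs_of_def)

lemma card_uncovered:
  assumes "matching (B ` {1..I}) P"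
  shows "card (B ` {1..I} - \<Union>P) = I - 2 * card P"
proof -
  have "card (B ` {1..I}) = I" by (simp add: card_image inj_on_def)
  moreover have "card (\<Union>P) = 2 * card P" using card_Union_matching[OF _ assms] by simp
  ultimately show ?thesis using Union_matching_sub[OF assms] by (simp add: card_Diff_subset finite_subset)
qed

lemma uncovered_bound:
  assumes inv: "Inv I S I M" and cov: "\<forall>a. 1 \<le> a \<and> a \<le> I \<longrightarrow> B a \<in> \<Union>M"
  shows "card (B ` {1..I} - \<Union>(bb_pairings M)) \<le> S"
proof -
  note c1 = Inv_parts(1)[OF inv] and c2 = Inv_parts(2)[OF inv]
  let ?U = "B ` {1..I} - \<Union>(bb_pairings M)"
  have ex: "\<exists>w. w \<in> W ` {1..S} \<and> {x, w} \<in> M" if x: "x \<in> ?U" for x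
  proof -
    obtain a0 where a0: "x = B a0" "1 \<le> a0" "a0 \<le> I" using x by auto
    then have "x \<in> \<Union>M" using cov by blast
    then obtain q where q: "q \<in> M" "x \<in> q" by blast
    obtain a e where ae: "q = {B a, e}" "1 \<le> a" "a \<le> I" "e \<in> devices I S" "e \<noteq> B a" "\<forall>c. e = B c \<longrightarrow> a < c"
      by (rule c1E[OF c1 q(1)])
    have "q \<notin> bb_pairings M" using q(2) x by blast
    then have "\<not> is_inf e" using q(1) ae(1) by (auto simp: bb_pairings_def)
    then obtain y where y: "e = W y" by (cases e) auto
    then have "1 \<le> y" "y \<le> S" using ae(4) by (auto simp: W_in_devices)
    have "x = B a" using q(2) ae(1) a0(1) y by auto
    then have "{x, e} \<in> M" using q(1) ae(1) by simp
    then show ?thesis using y \<open>1 \<le> y\<close> \<open>y \<le> S\<close> by (intro exI[of _ e]) auto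
  qed
  define f where "f x = (SOME w. w \<in> W ` {1..S} \<and> {x, w} \<in> M)" for x
  have f: "f x \<in> W ` {1..S}" "{x, f x} \<in> M" if "x \<in> ?U" for x
    using someI_ex[OF ex[OF that]] unfolding f_def by blast+
  have "inj_on f ?U"
  proof (rule inj_onI)
    fix x x' assume x: "x \<in> ?U" and x': "x' \<in> ?U" and eq: "f x = f x'"
    have "{x, f x} \<inter> {x', f x'} \<noteq> {}" using eq by simp
    then have "{x, f x} = {x', f x'}" using c2[rule_format, OF f(2)[OF x] f(2)[OF x']] by argo
    moreover have "x \<noteq> f x'" "x' \<noteq> f x" using x x' f(1)[OF x] f(1)[OF x'] by auto
    ultimately show "x = x'" by (auto simp: doubleton_eq_iff)
  qed
  moreover have "f ` ?U \<subseteq> W ` {1..S}" using f(1) by blast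
  ultimately have "card ?U \<le> card (W ` {1..S})" by (intro card_inj_on_le) auto
  also have "\<dots> = S" by (simp add: card_image inj_on_def)
  finally show ?thesis .
qed

lemma dagger_sound:
  assumes inv: "Inv I S I M" and P: "P = bb_pairings M" and IS: "I = 2 * card P + S + 1"
  shows "\<exists>h\<in>{S+1..I}. P \<in> D (B ` {h+1..I}) (B ` {1..h-1}) (card P)"
proof -
  note c1 = Inv_parts(1)[OF inv] and c2 = Inv_parts(2)[OF inv] and c3 = Inv_parts(3)[OF inv]
  have mP: "matching (B ` {1..I}) P" using bb_sound[OF inv] P by simp
  have cU: "card (B ` {1..I} - \<Union>P) = S + 1" using card_uncovered[OF mP] IS by simp
  have "\<not> (\<forall>a. 1 \<le> a \<and> a \<le> I \<longrightarrow> B a \<in> \<Union>M)"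
  proof
    assume "\<forall>a. 1 \<le> a \<and> a \<le> I \<longrightarrow> B a \<in> \<Union>M"
    from uncovered_bound[OF inv this] cU P show False by simp
  qed
  then obtain u where u: "1 \<le> u" "u \<le> I" "B u \<notin> \<Union>M" by blast
  with c3 have h: "devices I S - {B u} \<subseteq> \<Union>M" "\<forall>p\<in>M. \<exists>c<u. B c \<in> p" by blast+
  let ?H = "B ` {u+1..I}" and ?L = "B ` {1..u-1}"
  have HL: "?H \<union> ?L = B ` {1..I} - {B u}"
  proof (intro equalityI subsetI)
    fix x assume "x \<in> ?H \<union> ?L" then show "x \<in> B ` {1..I} - {B u}" using u by auto
  next
    fix x assume x: "x \<in> B ` {1..I} - {B u}"
    then obtain c where c: "x = B c" "c \<in> {1..I}" by blast
    have "c \<noteq> u" using x c by auto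
    then show "x \<in> ?H \<union> ?L" using c by (cases "c < u") auto
  qed
  have PM: "P \<subseteq> M" using P bb_sub by simp
  have uP: "B u \<notin> \<Union>P" using PM u(3) by blast
  have m1: "matching (?H \<union> ?L) P"
    using mP uP unfolding HL matching_def pairs_of_def by blast
  have cov: "?H \<subseteq> \<Union>P"
  proof
    fix x assume "x \<in> ?H"
    then obtain c where c: "x = B c" "u < c" "c \<le> I" by auto
    then have "x \<in> devices I S - {B u}" by (auto simp: B_in_devices)
    then have "x \<in> \<Union>M" using h(1) by blast
    then obtain q where q: "q \<in> M" "x \<in> q" by blast
    obtain a e where ae: "q = {B a, e}" "1 \<le> a" "a \<le> I" "e \<in> devices I S" "e \<noteq> B a" "\<forall>c. e = B c \<longrightarrow> a < c"
      by (rule c1E[OF c1 q(1)])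
    obtain c' where c': "c' < u" "B c' \<in> q" using h(2) q(1) by blast
    have "B c' \<noteq> x" using c c' by simp
    then have "q = {B c', x}" using ae(1) c'(2) q(2) by auto
    then have "\<forall>z\<in>q. is_inf z" using c by simp
    then have "q \<in> P" using q(1) P by (simp add: bb_pairings_def)
    then show "x \<in> \<Union>P" using q(2) by blast
  qed
  have nsub: "\<forall>p\<in>P. \<not> p \<subseteq> ?H"
  proof
    fix p assume "p \<in> P"
    then have "p \<in> M" using PM by blast
    then obtain c where "c < u" "B c \<in> p" using h(2) by blast
    moreover have "B c \<notin> ?H" using \<open>c < u\<close> by auto
    ultimately show "\<not> p \<subseteq> ?H" by blast
  qed
  have "B ` {1..I} - \<Union>P \<subseteq> B ` {1..u}"
  proof
    fix x assume x: "x \<in> B ` {1..I} - \<Union>P"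
    then obtain c where c: "x = B c" "1 \<le> c" "c \<le> I" by auto
    have "\<not> u < c"
    proof
      assume "u < c" then have "x \<in> ?H" using c by auto
      then show False using cov x by blast
    qed
    then show "x \<in> B ` {1..u}" using c by auto
  qed
  then have "S + 1 \<le> card (B ` {1..u})" using cU by (metis card_mono finite_atLeastAtMost finite_imageI)
  also have "\<dots> = u" by (simp add: card_image inj_on_def)
  finally have "S + 1 \<le> u" .
  then show ?thesis using u m1 cov nsub
    by (intro bexI[of _ u]) (auto simp: D_def Mat_def)
qed

lemma pair_of_B:
  assumes "p \<in> pairs_of (B ` {1..I})"
  obtains a c where "p = {B a, B c}" "1 \<le> a" "a < c" "c \<le> I"
proof -
  have "p \<subseteq> B ` {1..I}" "card p = 2" using assms by (auto simp: pairs_of_def)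
  then obtain x y where xy: "p = {x, y}" "x \<noteq> y" by (meson card_2_iff)
  then have "x \<in> B ` {1..I}" "y \<in> B ` {1..I}" using \<open>p \<subseteq> B ` {1..I}\<close> by auto
  then obtain a c where ac: "x = B a" "y = B c" "a \<in> {1..I}" "c \<in> {1..I}" by blast
  have "a \<noteq> c" using ac xy by auto
  show thesis
  proof (cases "a < c")
    case True then show ?thesis using that[of a c] ac xy by auto
  next
    case False then show ?thesis using that[of c a] ac xy \<open>a \<noteq> c\<close> by (auto simp: insert_commute)
  qed
qed

lemma construct:
  assumes mP: "matching (B ` {1..I}) P"
  and U': "U' \<subseteq> B ` {1..I} - \<Union>P"
  and g: "inj_on g U'" "g ` U' \<subseteq> W ` {1..S}"
  and alt: "U' = B ` {1..I} - \<Union>P \<or> (\<exists>u. U' = B ` {1..I} - \<Union>P - {B u} \<and> g ` U' = W ` {1..S}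
              \<and> (\<forall>p\<in>P. \<exists>c<u. B c \<in> p) \<and> (\<forall>x\<in>U'. \<exists>c<u. x = B c))"
  shows "Inv I S I (P \<union> (\<lambda>x. {x, g x}) ` U')" (is "Inv I S I ?M")
    and "bb_pairings (P \<union> (\<lambda>x. {x, g x}) ` U') = P"
proof -
  have gW: "\<exists>y. g x = W y \<and> 1 \<le> y \<and> y \<le> S" if "x \<in> U'" for x
    using g(2) that by auto
  have UB: "\<exists>a. x = B a \<and> 1 \<le> a \<and> a \<le> I" if "x \<in> U'" for x
    using U' that by auto
  have Pdis: "\<forall>p\<in>P. \<forall>q\<in>P. p \<noteq> q \<longrightarrow> p \<inter> q = {}" and Ppairs: "P \<subseteq> pairs_of (B ` {1..I})"
    using mP by (auto simp: matching_def)
  show "Inv I S I ?M"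
    unfolding Inv_def
  proof (intro conjI)
    show "\<forall>p\<in>?M. \<exists>a d. p = {B a, d} \<and> 1 \<le> a \<and> a \<le> I \<and> d \<in> devices I S \<and> d \<noteq> B a \<and> (\<forall>c. d = B c \<longrightarrow> a < c)"
    proof
      fix p assume "p \<in> ?M"
      then consider "p \<in> P" | x where "x \<in> U'" "p = {x, g x}" by blast
      then show "\<exists>a d. p = {B a, d} \<and> 1 \<le> a \<and> a \<le> I \<and> d \<in> devices I S \<and> d \<noteq> B a \<and> (\<forall>c. d = B c \<longrightarrow> a < c)"
      proof cases
        case 1
        then have "p \<in> pairs_of (B ` {1..I})" using Ppairs by blast
        then obtain a c where ac: "p = {B a, B c}" "1 \<le> a" "a < c" "c \<le> I" by (rule pair_of_B)
        then show ?thesis by (intro exI[of _ a] exI[of _ "B c"]) (simp add: B_in_devices)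
      next
        case 2
        obtain a where a: "x = B a" "1 \<le> a" "a \<le> I" using UB[OF 2(1)] by blast
        obtain y where y: "g x = W y" "1 \<le> y" "y \<le> S" using gW[OF 2(1)] by blast
        show ?thesis using 2(2) a y by (intro exI[of _ a] exI[of _ "g x"]) (simp add: W_in_devices)
      qed
    qed
    show "\<forall>p\<in>?M. \<forall>q\<in>?M. p \<noteq> q \<longrightarrow> p \<inter> q = {}"
    proof (intro ballI impI)
      fix p q assume p: "p \<in> ?M" and q: "q \<in> ?M" and pq: "p \<noteq> q"
      have A: "p \<inter> q = {}" if h: "p \<in> P" "x \<in> U'" "q = {x, g x}" for p q x
      proof -
        have "p \<subseteq> B ` {1..I}" using h(1) Ppairs by (auto simp: pairs_of_def)
        moreover have "x \<notin> p" using U' h(1,2) by blast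
        moreover obtain y where "g x = W y" using gW[OF h(2)] by blast
        ultimately show ?thesis using h(3) by auto
      qed
      have Bq: "p \<inter> q = {}" if h: "x \<in> U'" "p = {x, g x}" "x' \<in> U'" "q = {x', g x'}" "p \<noteq> q" for p q x x'
      proof -
        have "x \<noteq> x'" using that by auto
        then have "g x \<noteq> g x'" using g(1) h(1,3) by (auto simp: inj_on_def)
        moreover obtain y where "g x = W y" using gW[OF h(1)] by blast
        moreover obtain y' where "g x' = W y'" using gW[OF h(3)] by blast
        moreover obtain a where "x = B a" using UB[OF h(1)] by blast
        moreover obtain a' where "x' = B a'" using UB[OF h(3)] by blast
        ultimately show ?thesis using h(2,4) \<open>x \<noteq> x'\<close> by auto
      qed
      from p q show "p \<inter> q = {}"
      proof (elim UnE imageE)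
        assume "p \<in> P" "q \<in> P" then show ?thesis using Pdis pq by blast
      next
        fix x assume "p \<in> P" "x \<in> U'" "q = {x, g x}" then show ?thesis using A by blast
      next
        fix x assume "q \<in> P" "x \<in> U'" "p = {x, g x}" then show ?thesis using A[of q x p] by blast
      next
        fix x x' assume "x \<in> U'" "p = {x, g x}" "x' \<in> U'" "q = {x', g x'}"
        then show ?thesis using Bq pq by blast
      qed
    qed
    show "\<forall>a. 1 \<le> a \<and> a \<le> I \<longrightarrow> B a \<in> \<Union>?M \<or> (devices I S - {B a} \<subseteq> \<Union>?M \<and> (\<forall>p\<in>?M. \<exists>c<a. B c \<in> p))"
    proof (intro allI impI)
      fix a assume a: "1 \<le> a \<and> a \<le> I"
      show "B a \<in> \<Union>?M \<or> (devices I S - {B a} \<subseteq> \<Union>?M \<and> (\<forall>p\<in>?M. \<exists>c<a. B c \<in> p))"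
      proof (cases "B a \<in> \<Union>P \<or> B a \<in> U'")
        case True
        then have "B a \<in> \<Union>?M" by blast
        then show ?thesis by (rule disjI1)
      next
        case False
        then have "B a \<in> B ` {1..I} - \<Union>P" "B a \<notin> U'" using a by auto
        then have "U' \<noteq> B ` {1..I} - \<Union>P" by blast
        then have ex: "\<exists>u. U' = B ` {1..I} - \<Union>P - {B u} \<and> g ` U' = W ` {1..S}
              \<and> (\<forall>p\<in>P. \<exists>c<u. B c \<in> p) \<and> (\<forall>x\<in>U'. \<exists>c<u. x = B c)" using alt by argo
        obtain u where u: "U' = B ` {1..I} - \<Union>P - {B u}" "g ` U' = W ` {1..S}"
          "\<forall>p\<in>P. \<exists>c<u. B c \<in> p" "\<forall>x\<in>U'. \<exists>c<u. x = B c" using ex by (elim exE conjE) (rule that; assumption)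
        have "a = u"
        proof (rule ccontr)
          assume "a \<noteq> u"
          then have "B a \<in> U'" using u(1) \<open>B a \<in> B ` {1..I} - \<Union>P\<close> by simp
          then show False using \<open>B a \<notin> U'\<close> by simp
        qed
        have "devices I S - {B a} \<subseteq> \<Union>?M"
        proof
          fix z assume z: "z \<in> devices I S - {B a}"
          show "z \<in> \<Union>?M"
          proof (cases z)
            case (B c)
            then have "z \<in> B ` {1..I}" using z by (auto simp: B_in_devices)
            then have "z \<in> \<Union>P \<or> z \<in> U'" using z u(1) \<open>a = u\<close> by blast
            then show ?thesis by blast
          next
            case (W y)
            then have "z \<in> g ` U'" using z u(2) by (auto simp: W_in_devices)
            then obtain x where "x \<in> U'" "z = g x" by blast
            then have "z \<in> {x, g x}" "{x, g x} \<in> ?M" by auto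
            then show ?thesis by blast
          qed
        qed
        moreover have "\<forall>p\<in>?M. \<exists>c<a. B c \<in> p"
        proof
          fix p assume "p \<in> ?M"
          then consider "p \<in> P" | x where "x \<in> U'" "p = {x, g x}" by blast
          then show "\<exists>c<a. B c \<in> p"
          proof cases
            case 1 then show ?thesis using u(3) \<open>a = u\<close> by blast
          next
            case 2
            then obtain c where "c < u" "x = B c" using u(4) by blast
            then show ?thesis using 2 \<open>a = u\<close> by auto
          qed
        qed
        ultimately have "devices I S - {B a} \<subseteq> \<Union>?M \<and> (\<forall>p\<in>?M. \<exists>c<a. B c \<in> p)" by (rule conjI)
        then show ?thesis by (rule disjI2)
      qed
    qed
  qed
  show "bb_pairings ?M = P"
  proof (intro equalityI subsetI)
    fix p assume p: "p \<in> bb_pairings ?M"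
    then have "p \<in> ?M" "\<forall>z\<in>p. is_inf z" by (auto simp: bb_pairings_def)
    then consider "p \<in> P" | x where "x \<in> U'" "p = {x, g x}" by blast
    then show "p \<in> P"
    proof cases
      case 2
      obtain y where "g x = W y" using gW[OF 2(1)] by blast
      then have False using \<open>\<forall>z\<in>p. is_inf z\<close> 2(2) by simp
      then show ?thesis ..
    qed
  next
    fix p assume p: "p \<in> P"
    then have "p \<in> pairs_of (B ` {1..I})" using Ppairs by blast
    then obtain a c where "p = {B a, B c}" by (rule pair_of_B)
    then show "p \<in> bb_pairings ?M" using p by (simp add: bb_pairings_def)
  qed
qed




lemma matching_mono: "matching X P \<Longrightarrow> X \<subseteq> Y \<Longrightarrow> matching Y P"
  unfolding matching_def pairs_of_def by blast

lemma ach_nondagger: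
  assumes "I - 2 * j \<le> S" "2 * j \<le> I"
  shows "{bb_pairings M | M. possible_wiring I S M \<and> card (bb_pairings M) = j} = Mat (B ` {1..I}) j"
proof (intro equalityI subsetI)
  fix P assume "P \<in> {bb_pairings M | M. possible_wiring I S M \<and> card (bb_pairings M) = j}"
  then obtain M where M: "P = bb_pairings M" "Inv I S I M" "card P = j"
    using possible_wiring_iff by blast
  then show "P \<in> Mat (B ` {1..I}) j" using bb_sound[OF M(2)] by (simp add: Mat_def)
next
  fix P assume "P \<in> Mat (B ` {1..I}) j"
  then have mP: "matching (B ` {1..I}) P" and cP: "card P = j" by (auto simp: Mat_def)
  let ?U = "B ` {1..I} - \<Union>P"
  have cU: "card ?U = I - 2 * j" using card_uncovered[OF mP] cP by simp
  have "card ?U \<le> card (W ` {1..S})" using cU assms by (simp add: card_image inj_on_def)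
  then obtain T where T: "T \<subseteq> W ` {1..S}" "card T = card ?U" "finite T"
    by (rule obtain_subset_with_card_n)
  then obtain g where g: "bij_betw g ?U T" using finite_same_card_bij[of ?U T] by auto
  have g1: "inj_on g ?U" "g ` ?U \<subseteq> W ` {1..S}" using g T(1) by (auto simp: bij_betw_def)
  let ?M = "P \<union> (\<lambda>x. {x, g x}) ` ?U"
  have "Inv I S I ?M" "bb_pairings ?M = P"
    using construct[OF mP subset_refl g1(1) g1(2) disjI1[OF refl]] by blast+
  then have pw: "possible_wiring I S ?M" and bb: "bb_pairings ?M = P" using possible_wiring_iff by simp_all
  show "P \<in> {bb_pairings M | M. possible_wiring I S M \<and> card (bb_pairings M) = j}"
    unfolding mem_Collect_eq using pw bb cP by (intro exI[of _ ?M]) simp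
qed

lemma ach_dagger:
  assumes IS: "I = 2 * j + S + 1"
  shows "{bb_pairings M | M. possible_wiring I S M \<and> card (bb_pairings M) = j}
       = (\<Union>h\<in>{S+1..I}. D (B ` {h+1..I}) (B ` {1..h-1}) j)"
proof (intro equalityI subsetI)
  fix P assume "P \<in> {bb_pairings M | M. possible_wiring I S M \<and> card (bb_pairings M) = j}"
  then obtain M where M: "P = bb_pairings M" "Inv I S I M" "card P = j"
    using possible_wiring_iff by blast
  then show "P \<in> (\<Union>h\<in>{S+1..I}. D (B ` {h+1..I}) (B ` {1..h-1}) j)"
    using dagger_sound[OF M(2) M(1)] IS by auto
next
  fix P assume "P \<in> (\<Union>h\<in>{S+1..I}. D (B ` {h+1..I}) (B ` {1..h-1}) j)"
  then obtain h where h: "h \<in> {S+1..I}" "P \<in> D (B ` {h+1..I}) (B ` {1..h-1}) j" by blast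
  let ?H = "B ` {h+1..I}" and ?L = "B ` {1..h-1}"
  have D: "matching (?H \<union> ?L) P" "card P = j" "?H \<subseteq> \<Union>P" "\<forall>p\<in>P. \<not> p \<subseteq> ?H"
    using h(2) by (auto simp: D_def Mat_def)
  have HLsub: "?H \<union> ?L \<subseteq> B ` {1..I}" using h(1) by auto
  have hHL: "B h \<notin> ?H \<union> ?L" using h(1) by auto
  have mP: "matching (B ` {1..I}) P" using matching_mono[OF D(1) HLsub] .
  have uP: "B h \<notin> \<Union>P" using Union_matching_sub[OF D(1)] hHL by blast
  let ?U = "B ` {1..I} - \<Union>P"
  have cU: "card ?U = S + 1" using card_uncovered[OF mP] D(2) IS by simp
  have hU: "B h \<in> ?U" using uP h(1) by auto
  let ?U' = "?U - {B h}"
  have cU': "card ?U' = card (W ` {1..S})" using cU hU by (simp add: card_image inj_on_def)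
  then obtain g where g: "bij_betw g ?U' (W ` {1..S})" using finite_same_card_bij[of ?U' "W ` {1..S}"] by auto
  have g1: "inj_on g ?U'" "g ` ?U' \<subseteq> W ` {1..S}" "g ` ?U' = W ` {1..S}" using g by (auto simp: bij_betw_def)
  have c1: "\<forall>p\<in>P. \<exists>c<h. B c \<in> p"
  proof
    fix p assume p: "p \<in> P"
    then have "p \<subseteq> ?H \<union> ?L" using D(1) by (auto simp: matching_def pairs_of_def)
    moreover obtain z where "z \<in> p" "z \<notin> ?H" using D(4) p by blast
    ultimately have "z \<in> ?L" by blast
    then obtain c where "z = B c" "c < h" using h(1) by auto
    then show "\<exists>c<h. B c \<in> p" using \<open>z \<in> p\<close> by blast
  qed
  have c2: "\<forall>x\<in>?U'. \<exists>c<h. x = B c"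
  proof
    fix x assume x: "x \<in> ?U'"
    then obtain c where c: "x = B c" "c \<in> {1..I}" by blast
    have "c \<noteq> h" using x c by auto
    moreover have "\<not> h < c"
    proof
      assume "h < c" then have "x \<in> ?H" using c by auto
      then show False using D(3) x by blast
    qed
    ultimately show "\<exists>c<h. x = B c" using c by auto
  qed
  let ?M = "P \<union> (\<lambda>x. {x, g x}) ` ?U'"
  have alt: "?U' = ?U \<or> (\<exists>u. ?U' = ?U - {B u} \<and> g ` ?U' = W ` {1..S}
              \<and> (\<forall>p\<in>P. \<exists>c<u. B c \<in> p) \<and> (\<forall>x\<in>?U'. \<exists>c<u. x = B c))"
    using g1(3) c1 c2 by blast
  have "Inv I S I ?M" "bb_pairings ?M = P"
    using construct[OF mP Diff_subset g1(1) g1(2) alt] by blast+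
  then have pw: "possible_wiring I S ?M" and bb: "bb_pairings ?M = P" using possible_wiring_iff by simp_all
  show "P \<in> {bb_pairings M | M. possible_wiring I S M \<and> card (bb_pairings M) = j}"
    unfolding mem_Collect_eq using pw bb D(2) by (intro exI[of _ ?M]) simp
qed




lemma card_B_ivl: "card (B ` {a..b}) = card {a..b}"
  by (simp add: card_image inj_on_def)

lemma Ncount_nondagger:
  assumes "I - 2 * j \<le> S" "2 * j \<le> I"
  shows "real (Ncount I S j) = F I j"
proof -
  have "Ncount I S j = card (Mat (B ` {1..I}) j)"
    unfolding Ncount_def using ach_nondagger[OF assms] by simp
  then show ?thesis using card_Mat[of "B ` {1..I}" j] by (simp add: card_B_ivl)
qed

lemma Ncount_dagger:
  assumes IS: "I = 2 * j + S + 1"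
  shows "real (Ncount I S j) = (\<Sum>h=S+1..I. G (I - h) (h - 1) j)"
proof -
  let ?D = "\<lambda>h. D (B ` {h+1..I}) (B ` {1..h-1}) j"
  have "Ncount I S j = card (\<Union>h\<in>{S+1..I}. ?D h)"
    unfolding Ncount_def using ach_dagger[OF IS] by simp
  also have "\<dots> = (\<Sum>h=S+1..I. card (?D h))"
  proof (rule card_UN_disjoint[of "{S+1..I}" ?D])
    show "finite {S+1..I}" by simp
    show "\<forall>h\<in>{S+1..I}. finite (?D h)" by (auto intro: finite_D)
    have nd: "?D h \<inter> ?D h' = {}" if "h < h'" "h' \<le> I" for h h'
    proof (rule ccontr)
      assume "?D h \<inter> ?D h' \<noteq> {}"
      then obtain P where P: "P \<in> ?D h" "P \<in> ?D h'" by blast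
      have "B h' \<in> B ` {h+1..I}" using that by auto
      then have "B h' \<in> \<Union>P" using P(1) by (auto simp: D_def)
      moreover have "matching (B ` {h'+1..I} \<union> B ` {1..h'-1}) P" using P(2) by (simp add: D_def Mat_def)
      then have "\<Union>P \<subseteq> B ` {h'+1..I} \<union> B ` {1..h'-1}" by (rule Union_matching_sub)
      moreover have "B h' \<notin> B ` {h'+1..I} \<union> B ` {1..h'-1}" by auto
      ultimately show False by blast
    qed
    show "\<forall>h\<in>{S+1..I}. \<forall>h'\<in>{S+1..I}. h \<noteq> h' \<longrightarrow> ?D h \<inter> ?D h' = {}"
    proof (intro ballI impI)
      fix h h' assume "h \<in> {S+1..I}" "h' \<in> {S+1..I}" "h \<noteq> h'"
      then show "?D h \<inter> ?D h' = {}"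
        using nd[of h h'] nd[of h' h] by (cases "h < h'") (auto simp: Int_commute)
    qed
  qed
  finally have "real (Ncount I S j) = (\<Sum>h=S+1..I. real (card (?D h)))" by simp
  also have "\<dots> = (\<Sum>h=S+1..I. G (I - h) (h - 1) j)"
  proof (rule sum.cong)
    fix h assume h: "h \<in> {S+1..I}"
    have "B ` {h+1..I} \<inter> B ` {1..h-1} = {}" by auto
    then have "real (card (?D h)) = G (card (B ` {h+1..I})) (card (B ` {1..h-1})) j"
      by (intro card_D) auto
    then show "real (card (?D h)) = G (I - h) (h - 1) j" by (simp add: card_B_ivl)
  qed simp
  finally show ?thesis .
qed

lemma prod_shift1: "(\<Prod>k=1..j. f k) = (\<Prod>k<j. f (Suc k) :: real)"
  by (induction j) simp_all




lemma Gdag: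
  assumes IS: "I = 2 * j + S + 1" and j2: "2 \<le> j" and h: "S + 1 \<le> h" "h \<le> I"
  shows "G (I - h) (h - 1) j = N_dagger I S h"
proof -
  have jj: "(I - S - 1) div 2 = j" using IS by simp
  show ?thesis
  proof (cases "h = I")
    case True
    have "G (I - h) (h - 1) j = F (I - 1) j" using True by simp
    also have "\<dots> = 1 / fact j * (\<Prod>k<j. real (I - 1 - 2 * (Suc k - 1)) gchoose 2)"
      by (simp only: F_closed prod_shift1)
    also have "(\<Prod>k<j. real (I - 1 - 2 * (Suc k - 1)) gchoose 2) = (\<Prod>k<j. (real I - 1 - 2 * real k) gchoose 2)"
    proof (rule prod.cong)
      fix k assume "k \<in> {..<j}"
      then have "2 * k + 1 \<le> I" using IS by simp
      then have "real (I - 1 - 2 * (Suc k - 1)) = real I - 1 - 2 * real k" by (simp add: of_nat_diff)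
      then show "real (I - 1 - 2 * (Suc k - 1)) gchoose 2 = (real I - 1 - 2 * real k) gchoose 2" by simp
    qed simp
    finally show ?thesis using True unfolding N_dagger_def Let_def jj by simp
  next
    case hI: False
    show ?thesis
    proof (cases "h = I - 1")
      case True
      have j1: "j = Suc (j - 1)" using j2 by simp
      have "I - h = Suc 0" using True IS by simp
      then have "G (I - h) (h - 1) j = real (h - 1) * F (h - 2) (j - 1)"
        by (subst j1) (simp add: numeral_2_eq_2)
      also have "\<dots> = (real I - 2) * F (I - 3) (j - 1)" using True IS j2 by (simp add: of_nat_diff)
      also have "F (I - 3) (j - 1) = 1 / fact (j - 1) * (\<Prod>k<j-1. real (I - 3 - 2 * (Suc k - 1)) gchoose 2)"
        by (simp only: F_closed prod_shift1)
      also have "(\<Prod>k<j-1. real (I - 3 - 2 * (Suc k - 1)) gchoose 2) = (\<Prod>k<j-1. (real I - 3 - 2 * real k) gchoose 2)"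
      proof (rule prod.cong)
        fix k assume "k \<in> {..<j-1}"
        then have "2 * k + 3 \<le> I" using IS by simp
        then have "real (I - 3 - 2 * (Suc k - 1)) = real I - 3 - 2 * real k" by (simp add: of_nat_diff)
        then show "real (I - 3 - 2 * (Suc k - 1)) gchoose 2 = (real I - 3 - 2 * real k) gchoose 2" by simp
      qed simp
      finally show ?thesis using True hI unfolding N_dagger_def Let_def jj by simp
    next
      case hI1: False
      have h1: "1 \<le> h" using h by simp
      have pe: "(\<Prod>t=1..I-h. real (h - 1) + 1 - real t) = (\<Prod>t=1..I-h. real h - real t)"
        using h1 by (simp add: of_nat_diff)
      have G: "G (I - h) (h - 1) j = (if I - h \<le> j then (\<Prod>t=1..I-h. real h - real t) * F (h - 1 - (I - h)) (j - (I - h)) else 0)"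
        by (simp only: G_closed pe)
      show ?thesis
      proof (cases "j < I - h")
        case True then show ?thesis using hI hI1 unfolding N_dagger_def Let_def jj G by simp
      next
        case False
        show ?thesis
        proof (cases "j = I - h")
          case True then show ?thesis using hI hI1 unfolding N_dagger_def Let_def jj G by simp
        next
          case jgt: False
          let ?m = "j - (I - h)"
          have "F (h - 1 - (I - h)) ?m = 1 / fact ?m * (\<Prod>t=1..?m. real (h - 1 - (I - h) - 2 * (t - 1)) gchoose 2)"
            by (rule F_closed)
          also have "(\<Prod>t=1..?m. real (h - 1 - (I - h) - 2 * (t - 1)) gchoose 2)
                   = (\<Prod>t=1..?m. (2 * real h - real I - 1 - 2 * (real t - 1)) gchoose 2)"
          proof (rule prod.cong)
            fix t assume t: "t \<in> {1..?m}"
            then have "2 * (t - 1) + 1 + (I - h) \<le> h - 1" "I - h \<le> h - 1" "1 \<le> t" "h \<le> I" using IS h False jgt by auto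
            then have "real (h - 1 - (I - h) - 2 * (t - 1)) = 2 * real h - real I - 1 - 2 * (real t - 1)"
              by (simp add: of_nat_diff)
            then show "real (h - 1 - (I - h) - 2 * (t - 1)) gchoose 2 = (2 * real h - real I - 1 - 2 * (real t - 1)) gchoose 2"
              by simp
          qed simp
          finally show ?thesis using hI hI1 False jgt unfolding N_dagger_def Let_def jj G by simp
        qed
      qed
    qed
  qed
qed




theorem lemma4:
  fixes I S j :: nat
  assumes "L I S \<le> j" and "j \<le> I div 2"
  shows "(\<not> dagger_case I S j \<longrightarrow>
            real (Ncount I S j) = 1 / fact j * (\<Prod>k=1..j. real (I - 2 * (k - 1)) gchoose 2))
       \<and> (dagger_case I S j \<and> j = 0 \<longrightarrow> Ncount I S j = 1)
       \<and> (dagger_case I S j \<and> j = 1 \<longrightarrow> Ncount I S j = (I choose 2) - 1)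
       \<and> (dagger_case I S j \<and> j \<ge> 2 \<longrightarrow>
            real (Ncount I S j) = (\<Sum>h=S+1..I. N_dagger I S h))"
proof (intro conjI impI)
  have j2: "2 * j \<le> I" using assms(2) by simp
  assume nd: "\<not> dagger_case I S j"
  have "I - 2 * j \<le> S"
  proof (cases "I \<le> S")
    case True then show ?thesis by simp
  next
    case False
    show ?thesis
    proof (cases "even (I - S)")
      case True
      then have "L I S = (I - S) div 2" using False by (simp add: L_def)
      then show ?thesis using assms(1) True False by presburger
    next
      case odd: False
      then have "L I S = (I - S - 1) div 2" using False by (simp add: L_def)
      moreover have "\<not> 2 * j = I - S - 1" using nd False odd unfolding dagger_case_def by presburger
      ultimately show ?thesis using assms(1) odd False by presburger
    qed
  qed
  then show "real (Ncount I S j) = 1 / fact j * (\<Prod>k=1..j. real (I - 2 * (k - 1)) gchoose 2)"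
    using Ncount_nondagger[OF _ j2] F_closed by simp
next
  assume "dagger_case I S j \<and> j = 0"
  then have IS: "I = 2 * j + S + 1" "j = 0" by (auto simp: dagger_case_def)
  have "real (Ncount I S j) = (\<Sum>h=S+1..I. G (I - h) (h - 1) j)" by (rule Ncount_dagger[OF IS(1)])
  also have "\<dots> = (\<Sum>h=S+1..S+1. G (S + 1 - h) (h - 1) 0)" using IS by simp
  also have "\<dots> = 1" by simp
  finally show "Ncount I S j = 1" by simp
next
  assume "dagger_case I S j \<and> j = 1"
  then have IS: "I = 2 * j + S + 1" "j = 1" by (auto simp: dagger_case_def)
  have set: "{S+1..S+3} = {S+1, S+2, S+3}" by auto
  have I3: "I = S + 3" using IS by simp
  have "real (Ncount I S j) = (\<Sum>h=S+1..I. G (I - h) (h - 1) j)" by (rule Ncount_dagger[OF IS(1)])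
  also have "\<dots> = (\<Sum>h=S+1..S+3. G (S + 3 - h) (h - 1) 1)" by (simp only: I3 IS(2))
  also have "\<dots> = G 2 S 1 + G 1 (S+1) 1 + G 0 (S+2) 1" unfolding set by simp
  also have "\<dots> = real (S + 1) + (real (S + 2) gchoose 2)" by (simp add: numeral_2_eq_2)
  also have "\<dots> = real ((S + 3) choose 2) - 1"
    by (simp add: binomial_gbinomial gbinomial_prod_rev numeral_2_eq_2 field_simps)
  finally have "real (Ncount I S j) = real ((S + 3) choose 2) - 1" .
  then have "real (Ncount I S j) = real (I choose 2) - 1" by (simp only: I3)
  moreover have "0 < I choose 2" using I3 zero_less_binomial[of 2 I] by simp
  ultimately show "Ncount I S j = (I choose 2) - 1" by (simp add: of_nat_diff)
next
  assume "dagger_case I S j \<and> 2 \<le> j"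
  then have IS: "I = 2 * j + S + 1" and j2: "2 \<le> j" by (auto simp: dagger_case_def)
  have "real (Ncount I S j) = (\<Sum>h=S+1..I. G (I - h) (h - 1) j)" by (rule Ncount_dagger[OF IS])
  also have "\<dots> = (\<Sum>h=S+1..I. N_dagger I S h)"
  proof (rule sum.cong)
    fix h assume "h \<in> {S+1..I}"
    then show "G (I - h) (h - 1) j = N_dagger I S h" using Gdag[OF IS j2, of h] by simp
  qed simp
  finally show "real (Ncount I S j) = (\<Sum>h=S+1..I. N_dagger I S h)" .
qed


end
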